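(* Let $N\ge 1$, let $C_1\ge C_2\ge\cdots\ge C_N>0$ be link capacities, let $X$ be a total traffic demand with $0\le X\le \sum_{i=1}^N C_i$, and let $E:[0,C_1]\to\mathbb{R}$ be a strictly concave function (the common per-link cost). Consider the problem of minimizing $E_B(x_1,\dots,x_N)=\sum_{i=1}^N E(x_i)$ subject to $0\le x_i\le C_i$ for all $i$ and $\sum_{i=1}^N x_i = X$. Then $E_B$ attains its minimum over this feasible set at the allocation defined recursively by $x_i=\min\{C_i,\ X-\sum_{j<i}x_j\}$ for $i=1,\dots,N$.
   Context: The allocation $x_i=\min\{C_i, X-\sum_{j<i}x_j\}$ is the sequential "water-filling" allocation: each link is filled to capacity before any traffic is sent on the next one. *)

theory Defs
  imports "HOL-Analysis.Analysis"
begin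

definition strict_concave_on :: "real set \<Rightarrow> (real \<Rightarrow> real) \<Rightarrow> bool" where
  "strict_concave_on S f \<longleftrightarrow>
     (\<forall>x\<in>S. \<forall>y\<in>S. \<forall>t::real. x \<noteq> y \<and> 0 < t \<and> t < 1 \<longrightarrow>
        f ((1 - t) * x + t * y) > (1 - t) * f x + t * f y)"

definition feasible :: "nat \<Rightarrow> (nat \<Rightarrow> real) \<Rightarrow> real \<Rightarrow> (nat \<Rightarrow> real) \<Rightarrow> bool" where
  "feasible N C X x \<longleftrightarrow>
     (\<forall>i\<in>{1..N}. 0 \<le> x i \<and> x i \<le> C i) \<and> (\<Sum>i=1..N. x i) = X"

end

theory Submission
  imports Defs
begin

lemma sum_upd2:
  fixes h :: "'b \<Rightarrow> real"
  assumes "finite A" "n \<in> A" "j \<in> A" "n \<noteq> j"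
  shows "(\<Sum>i\<in>A. h ((f(n:=a, j:=b)) i)) = (\<Sum>i\<in>A. h (f i)) - h (f n) - h (f j) + h a + h b"
proof -
  define g where "g = (\<lambda>i. h ((f(n:=a, j:=b)) i))"
  define g2 where "g2 = (\<lambda>i. h (f i))"
  have 1: "sum g A = g n + sum g (A - {n})" using assms by (simp add: sum.remove)
  have 2: "sum g (A - {n}) = g j + sum g (A - {n} - {j})" using assms by (simp add: sum.remove)
  have 3: "sum g2 A = g2 n + sum g2 (A - {n})" using assms by (simp add: sum.remove)
  have 4: "sum g2 (A - {n}) = g2 j + sum g2 (A - {n} - {j})" using assms by (simp add: sum.remove)
  have 5: "sum g (A - {n} - {j}) = sum g2 (A - {n} - {j})"
    by (rule sum.cong) (auto simp: g_def g2_def)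
  have "sum g A = sum g2 A - g2 n - g2 j + h a + h b"
    using 1 2 3 4 5 assms(4) by (simp add: g_def g2_def algebra_simps)
  then show ?thesis by (simp add: g_def g2_def)
qed

context
  fixes N :: nat and C :: "nat \<Rightarrow> real" and E :: "real \<Rightarrow> real"
  assumes mono: "\<And>i. 1 \<le> i \<Longrightarrow> i < N \<Longrightarrow> C i \<ge> C (Suc i)"
    and CN: "C N > 0"
    and sc: "strict_concave_on {0..C 1} E"
begin

lemma Cmono: "i \<le> j \<Longrightarrow> 1 \<le> i \<Longrightarrow> j \<le> N \<Longrightarrow> C j \<le> C i"
proof (induction j)
  case 0 then show ?case by simp
next
  case (Suc j)
  show ?case
  proof (cases "i = Suc j")
    case True then show ?thesis by simp
  next
    case False
    then have "C j \<le> C i" using Suc by simp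
    moreover have "C (Suc j) \<le> C j" using mono[of j] Suc False by simp
    ultimately show ?thesis by simp
  qed
qed

lemma Cpos: "1 \<le> i \<Longrightarrow> i \<le> N \<Longrightarrow> C i > 0"
  using Cmono[of i N] CN by simp

lemma Cle1: "1 \<le> i \<Longrightarrow> i \<le> N \<Longrightarrow> C i \<le> C 1"
  using Cmono[of 1 i] by simp

lemma conc: "a \<in> {0..C 1} \<Longrightarrow> b \<in> {0..C 1} \<Longrightarrow> 0 \<le> t \<Longrightarrow> t \<le> 1 \<Longrightarrow>
   (1-t)*E a + t*E b \<le> E((1-t)*a + t*b)"
proof -
  assume a: "a \<in> {0..C 1}" and b: "b \<in> {0..C 1}" and t: "0 \<le> t" "t \<le> 1"
  show ?thesis
  proof (cases "a = b \<or> t = 0 \<or> t = 1")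
    case True
    then show ?thesis
    proof (elim disjE)
      assume "a = b"
      then have "(1-t)*a + t*b = a" "(1-t)*E a + t*E b = E a" by (simp_all add: algebra_simps)
      then show ?thesis by simp
    qed auto
  next
    case False
    then have "a \<noteq> b" "0 < t" "t < 1" using t by auto
    then show ?thesis using sc a b unfolding strict_concave_on_def
      by (meson less_imp_le)
  qed
qed

lemma two: "0 \<le> p \<Longrightarrow> 0 \<le> d \<Longrightarrow> d \<le> q \<Longrightarrow> q \<le> p + d \<Longrightarrow> p + d \<le> C 1 \<Longrightarrow>
   E (p+d) + E (q-d) \<le> E p + E q"
proof -
  assume h: "0 \<le> p" "0 \<le> d" "d \<le> q" "q \<le> p + d" "p + d \<le> C 1"
  show ?thesis
  proof (cases "d = 0")
    case True then show ?thesis by simp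
  next
    case False
    define u where "u = q - d"
    define v where "v = p + d"
    define t where "t = (p - u)/(v - u)"
    have uv: "u < v" using h False unfolding u_def v_def by linarith
    have t0: "0 \<le> t" using h uv unfolding t_def u_def v_def by simp
    have t1: "t \<le> 1" using h uv unfolding t_def u_def v_def by (simp add: divide_le_eq_1)
    have tv: "t*(v-u) = p - u" using uv unfolding t_def by simp
    have pe: "p = (1-t)*u + t* v" using tv by (simp add: algebra_simps)
    have qe: "q = (1-(1-t))*u + (1-t)* v" using pe unfolding u_def v_def by (simp add: algebra_simps)
    have ud: "u \<in> {0..C 1}" "v \<in> {0..C 1}" using h uv unfolding u_def v_def by auto
    have 1: "(1-t)*E u + t* E v \<le> E p" using conc[OF ud t0 t1] pe by simp
    have 2: "(1-(1-t))*E u + (1-t)* E v \<le> E q" using conc[OF ud _ _, of "1-t"] qe t0 t1 by simp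
    have "E u + E v \<le> E p + E q" using 1 2 by (simp add: algebra_simps)
    then show ?thesis unfolding u_def v_def by simp
  qed
qed

definition feas :: "nat \<Rightarrow> real \<Rightarrow> (nat \<Rightarrow> real) \<Rightarrow> bool" where
  "feas m X y \<longleftrightarrow> (\<forall>i\<in>{m..N}. 0 \<le> y i \<and> y i \<le> C i) \<and> (\<Sum>i=m..N. y i) = X"

definition greedy :: "nat \<Rightarrow> real \<Rightarrow> nat \<Rightarrow> real" where
  "greedy m X i = max 0 (min (C i) (X - (\<Sum>j=m..<i. C j)))"


lemma yleX:
  assumes "feas n X y" "i \<in> {n..N}"
  shows "y i \<le> X"
proof -
  have "y i \<le> (\<Sum>k=n..N. y k)"
    by (rule member_le_sum) (use assms in \<open>auto simp: feas_def\<close>)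
  then show ?thesis using assms by (simp add: feas_def)
qed

lemma exch:
  "1 \<le> n \<Longrightarrow> n \<le> N \<Longrightarrow> feas n X y \<Longrightarrow> \<exists>y'. feas n X y' \<and> y' n = min (C n) X \<and>
     (\<Sum>i=n..N. E (y' i)) \<le> (\<Sum>i=n..N. E (y i))"
proof (induction "card {j\<in>{Suc n..N}. y j > 0}" arbitrary: y rule: less_induct)
  case less
  note F = less.prems(3)
  have bnd: "\<And>i. i \<in> {n..N} \<Longrightarrow> 0 \<le> y i \<and> y i \<le> C i" using F by (simp add: feas_def)
  have sumX: "(\<Sum>i=n..N. y i) = X" using F by (simp add: feas_def)
  define a where "a = min (C n) X"
  have yna: "y n \<le> a" using bnd[of n] yleX[OF F, of n] less.prems unfolding a_def by simp
  show ?case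
  proof (cases "y n = a")
    case True then show ?thesis using F unfolding a_def by blast
  next
    case False
    then have lt: "y n < a" using yna by simp
    have "(\<Sum>i=n..N. y i) = y n + (\<Sum>i=Suc n..N. y i)"
      using less.prems by (simp add: sum.atLeast_Suc_atMost)
    then have pos: "(\<Sum>i=Suc n..N. y i) > 0" using sumX lt unfolding a_def by simp
    obtain j where j: "j \<in> {Suc n..N}" "y j > 0"
    proof -
      have "\<exists>j\<in>{Suc n..N}. y j > 0"
      proof (rule ccontr)
        assume "\<not> ?thesis"
        then have "(\<Sum>i=Suc n..N. y i) \<le> 0" by (intro sum_nonpos) (force simp: not_less)
        then show False using pos by simp
      qed
      then show ?thesis using that by blast
    qed
    have jn: "n \<noteq> j" using j by simp
    have jN: "j \<in> {n..N}" using j by simp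
    define d where "d = min (y j) (a - y n)"
    define y2 where "y2 = y(n := y n + d, j := y j - d)"
    have Cjn: "C j \<le> C n" using Cmono[of n j] j less.prems by simp
    have yja: "y j \<le> a" using bnd[OF jN] yleX[OF F jN] Cjn unfolding a_def by simp
    have Cn1: "C n \<le> C 1" using Cle1 less.prems by simp
    have d0: "0 \<le> d" "d \<le> y j" using lt j unfolding d_def by auto
    have dle: "y n + d \<le> a" unfolding d_def by simp
    have aCn: "a \<le> C n" unfolding a_def by simp
    have f2: "feas n X y2"
    proof -
      have "\<forall>i\<in>{n..N}. 0 \<le> y2 i \<and> y2 i \<le> C i"
        using bnd d0 dle aCn bnd[of n] bnd[OF jN] less.prems unfolding y2_def by auto
      moreover have "(\<Sum>i=n..N. y2 i) = X"
        using sum_upd2[of "{n..N}" n j "\<lambda>x. x" y "y n + d" "y j - d"] jn jN less.prems sumX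
        unfolding y2_def by simp
      ultimately show ?thesis by (simp add: feas_def)
    qed
    have cost: "(\<Sum>i=n..N. E (y2 i)) \<le> (\<Sum>i=n..N. E (y i))"
    proof -
      have "E (y n + d) + E (y j - d) \<le> E (y n) + E (y j)"
      proof (rule two)
        show "0 \<le> y n" using bnd[of n] less.prems by simp
        show "0 \<le> d" "d \<le> y j" using d0 by auto
        show "y j \<le> y n + d" using yja bnd[of n] less.prems unfolding d_def by auto
        show "y n + d \<le> C 1" using dle aCn Cn1 by simp
      qed
      then show ?thesis
        using sum_upd2[of "{n..N}" n j E y "y n + d" "y j - d"] jn jN less.prems
        unfolding y2_def by simp
    qed
    show ?thesis
    proof (cases "d = a - y n")
      case True
      then have "y2 n = a" using jn unfolding y2_def by simp
      then show ?thesis using f2 cost unfolding a_def by blast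
    next
      case False
      then have "d = y j" unfolding d_def by (simp add: min_def split: if_splits)
      then have y2j: "y2 j = 0" unfolding y2_def by simp
      have sub: "{k\<in>{Suc n..N}. y2 k > 0} \<subset> {k\<in>{Suc n..N}. y k > 0}"
      proof
        show "{k\<in>{Suc n..N}. y2 k > 0} \<subseteq> {k\<in>{Suc n..N}. y k > 0}"
          using d0 unfolding y2_def by auto
        show "{k\<in>{Suc n..N}. y2 k > 0} \<noteq> {k\<in>{Suc n..N}. y k > 0}"
        proof
          assume eq: "{k\<in>{Suc n..N}. y2 k > 0} = {k\<in>{Suc n..N}. y k > 0}"
          have "j \<in> {k\<in>{Suc n..N}. y k > 0}" using j by simp
          then have "j \<in> {k\<in>{Suc n..N}. y2 k > 0}" using eq by simp
          then show False using y2j by simp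
        qed
      qed
      have "card {k\<in>{Suc n..N}. y2 k > 0} < card {k\<in>{Suc n..N}. y k > 0}"
        by (rule psubset_card_mono) (use sub in auto)
      then obtain y' where y': "feas n X y'" "y' n = min (C n) X"
        "(\<Sum>i=n..N. E (y' i)) \<le> (\<Sum>i=n..N. E (y2 i))"
        using less.hyps[of y2] less.prems f2 by blast
      then show ?thesis using cost by (meson order_trans)
    qed
  qed
qed

lemma greedy_shift:
  assumes "1 \<le> n" "i \<in> {Suc n..N}" "0 \<le> X"
  shows "greedy (Suc n) (X - min (C n) X) i = greedy n X i"
proof -
  have S: "(\<Sum>j=n..<i. C j) = C n + (\<Sum>j=Suc n..<i. C j)"
    using assms by (simp add: sum.atLeast_Suc_lessThan)
  have S0: "(\<Sum>j=Suc n..<i. C j) \<ge> 0"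
    using assms by (auto intro!: sum_nonneg less_imp_le[OF Cpos])
  have Ci: "C i > 0" using assms by (intro Cpos) auto
  show ?thesis unfolding greedy_def S using S0 Ci
    by (auto simp: min_def max_def)
qed

lemma main:
  "m \<le> N+1 \<Longrightarrow> \<forall>X y. 1 \<le> m \<longrightarrow> feas m X y \<longrightarrow>
     (\<Sum>i=m..N. E (greedy m X i)) \<le> (\<Sum>i=m..N. E (y i))"
proof (induction m rule: inc_induct)
  case base
  then show ?case by simp
next
  case (step n)
  show ?case
  proof (intro allI impI)
    fix X y assume n1: "1 \<le> n" and F: "feas n X y"
    have nN: "n \<le> N" using step by simp
    obtain y' where y': "feas n X y'" "y' n = min (C n) X"
        "(\<Sum>i=n..N. E (y' i)) \<le> (\<Sum>i=n..N. E (y i))"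
      using exch[OF n1 nN F] by blast
    define a where "a = min (C n) X"
    have X0: "0 \<le> X" using F unfolding feas_def by (metis sum_nonneg)
    have split1: "\<And>f. (\<Sum>i=n..N. f i) = f n + (\<Sum>i=Suc n..N. f i)"
      using nN by (simp add: sum.atLeast_Suc_atMost)
    have F2: "feas (Suc n) (X - a) y'"
      using y'(1,2) split1[of y'] unfolding feas_def a_def by auto
    have IH: "(\<Sum>i=Suc n..N. E (greedy (Suc n) (X - a) i)) \<le> (\<Sum>i=Suc n..N. E (y' i))"
      using step.IH F2 by simp
    have geq: "(\<Sum>i=Suc n..N. E (greedy (Suc n) (X - a) i)) = (\<Sum>i=Suc n..N. E (greedy n X i))"
      by (rule sum.cong) (use greedy_shift[OF n1 _ X0] in \<open>auto simp: a_def\<close>)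
    have gn: "greedy n X n = a" unfolding greedy_def a_def using X0 Cpos[OF n1 nN] by simp
    have "(\<Sum>i=n..N. E (greedy n X i)) = E a + (\<Sum>i=Suc n..N. E (greedy n X i))"
      using split1[of "\<lambda>i. E (greedy n X i)"] gn by simp
    also have "\<dots> \<le> E (y' n) + (\<Sum>i=Suc n..N. E (y' i))" using IH geq y'(2) a_def by simp
    also have "\<dots> = (\<Sum>i=n..N. E (y' i))" using split1[of "\<lambda>i. E (y' i)"] by simp
    also have "\<dots> \<le> (\<Sum>i=n..N. E (y i))" by (rule y'(3))
    finally show "(\<Sum>i=n..N. E (greedy n X i)) \<le> (\<Sum>i=n..N. E (y i))" .
  qed
qed

lemma gsum: "k \<le> N+1 \<Longrightarrow> 0 \<le> X \<Longrightarrow> (\<Sum>i=1..<k. greedy 1 X i) = min X (\<Sum>i=1..<k. C i)"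
proof (induction k)
  case 0 then show ?case by simp
next
  case (Suc k)
  show ?case
  proof (cases "k = 0")
    case True then show ?thesis using Suc by simp
  next
    case False
    then have k: "1 \<le> k" "k \<le> N" using Suc by auto
    have IH: "(\<Sum>i=1..<k. greedy 1 X i) = min X (\<Sum>i=1..<k. C i)" using Suc by simp
    have Ck: "C k > 0" using Cpos k by simp
    show ?thesis using IH Ck k unfolding sum.atLeastLessThan_Suc[OF k(1)] greedy_def
      by (auto simp: min_def max_def)
  qed
qed

lemma final:
  assumes "0 \<le> X" and "X \<le> (\<Sum>i=1..N. C i)"
    and xr: "\<And>i. 1 \<le> i \<Longrightarrow> i \<le> N \<Longrightarrow> x i = min (C i) (X - (\<Sum>j=1..<i. x j))"
  shows "feasible N C X x \<and>
         (\<forall>y. feasible N C X y \<longrightarrow> (\<Sum>i=1..N. E (x i)) \<le> (\<Sum>i=1..N. E (y i)))"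
proof -
  have xg: "x i = greedy 1 X i" if "i \<le> N" "1 \<le> i" for i
    using that
  proof (induction i rule: less_induct)
    case (less i)
    have "(\<Sum>j=1..<i. x j) = (\<Sum>j=1..<i. greedy 1 X j)"
      by (rule sum.cong) (use less in auto)
    also have "\<dots> = min X (\<Sum>j=1..<i. C j)" using gsum less.prems assms(1) by simp
    finally have e: "(\<Sum>j=1..<i. x j) = min X (\<Sum>j=1..<i. C j)" .
    have Ci: "C i > 0" using Cpos less.prems by simp
    show ?case using xr[of i] less.prems e Ci unfolding greedy_def
      by (auto simp: min_def max_def)
  qed
  have xs: "(\<Sum>i=1..N. E (x i)) = (\<Sum>i=1..N. E (greedy 1 X i))"
    by (rule sum.cong) (use xg in auto)
  have xsum: "(\<Sum>i=1..N. x i) = X"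
  proof -
    have "(\<Sum>i=1..N. x i) = (\<Sum>i=1..<N+1. greedy 1 X i)"
      using xg by (simp add: atLeastLessThanSuc_atLeastAtMost)
    also have "\<dots> = min X (\<Sum>i=1..<N+1. C i)" by (rule gsum) (simp_all add: assms(1))
    also have "\<dots> = X" using assms(2) by (simp add: atLeastLessThanSuc_atLeastAtMost)
    finally show ?thesis .
  qed
  have xb: "\<forall>i\<in>{1..N}. 0 \<le> x i \<and> x i \<le> C i"
    using xg Cpos unfolding greedy_def by (force simp: max_def min_def)
  have feasx: "feasible N C X x" using xb xsum by (simp add: feasible_def)
  moreover have "\<forall>y. feasible N C X y \<longrightarrow> (\<Sum>i=1..N. E (x i)) \<le> (\<Sum>i=1..N. E (y i))"
  proof (intro allI impI)
    fix y assume "feasible N C X y"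
    then have "feas 1 X y" by (simp add: feasible_def feas_def)
    then show "(\<Sum>i=1..N. E (x i)) \<le> (\<Sum>i=1..N. E (y i))"
      using main[of 1] xs by simp
  qed
  ultimately show ?thesis by blast
qed

end

theorem proposition1:
  fixes N :: nat and C :: "nat \<Rightarrow> real" and X :: real
    and E :: "real \<Rightarrow> real" and x :: "nat \<Rightarrow> real"
  assumes "N \<ge> 1"
    and "\<And>i. 1 \<le> i \<Longrightarrow> i < N \<Longrightarrow> C i \<ge> C (Suc i)"
    and "C N > 0"
    and "0 \<le> X" and "X \<le> (\<Sum>i=1..N. C i)"
    and "strict_concave_on {0..C 1} E"
    and "\<And>i. 1 \<le> i \<Longrightarrow> i \<le> N \<Longrightarrow> x i = min (C i) (X - (\<Sum>j=1..<i. x j))"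
  shows "feasible N C X x \<and>
         (\<forall>y. feasible N C X y \<longrightarrow> (\<Sum>i=1..N. E (x i)) \<le> (\<Sum>i=1..N. E (y i)))"
  by (rule final[OF assms(2) assms(3) assms(6) assms(4) assms(5) assms(7)])

end
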